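(* For $m\ge 2$ and $E>0$ let $$f_m(E)=\frac{e^{-4E}\,\Gamma(m)\,I_{m-1}(4E)}{2m\,(2E)^{m-3}}.$$ (i) If $a>0$ and $E=a(m-1)$, then $f_m(E)$ decays exponentially in $m$: there is $c\in(0,1)$ with $f_m(a(m-1))=O(c^m)$. (ii) If $a>0$, $r<1$ and $E=am^r$, then $f_m(E)$ does not decay exponentially: for every $b\in(0,1)$, $f_m(am^r)/b^m\to\infty$ as $m\to\infty$. (iii) If $E=E_m$ vanishes exponentially in $m$ (i.e. $E_m=O(q^m)$ for some $q\in(0,1)$), then $f_m(E_m)$ decays exponentially in $m$.
   Context: $I_{m-1}$ is the modified Bessel function of the first kind of order $m-1$. The quantity $f_m(E)$ is the prefactor in the paper's Proposition 1: for a coherent input of total intensity $E$ on $m$ modes and a Haar-random linear optical circuit, the expected squared gradient of the compiling cost $1-|\langle\vec u|U(\theta)|\vec u\rangle|^2$ lies in $f_m(E)[\xi_{\min},\xi_{\max}]$, with $\xi_{\min},\xi_{\max}$ the minimal/maximal squared column norms of the generator matrix of the trained layer. *)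

theory Defs
  imports "HOL-Analysis.Analysis" "HOL-Library.Landau_Symbols"
begin

text \<open>Modified Bessel function of the first kind of integer order n:
  I_n(x) = sum over k of (x/2)^(2k+n) / (k! * Gamma(k+n+1)), with Gamma(k+n+1) = (k+n)!.\<close>
definition besselI :: "nat \<Rightarrow> real \<Rightarrow> real" where
  "besselI n x = (\<Sum>k. (x / 2) ^ (2 * k + n) / (fact k * fact (k + n)))"

definition fpref :: "nat \<Rightarrow> real \<Rightarrow> real" where
  "fpref m E = exp (- 4 * E) * Gamma (real m) * besselI (m - 1) (4 * E)
               / (2 * real m * (2 * E) powr (real m - 3))"

end

theory Submission
  imports Defs "HOL-Real_Asymp.Real_Asymp"
begin


lemma exp_sums_real: "(\<lambda>k. (t::real)^k / fact k) sums exp t"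
  using exp_converges[of t] by (simp add: divide_inverse mult.commute scaleR_conv_of_real)

lemma pow_fact_le_exp: assumes "(t::real) \<ge> 0" shows "t^n / fact n \<le> exp t"
proof -
  have "(\<Sum>k\<in>{n}. t^k / fact k) \<le> (\<Sum>k. t^k / fact k)"
    by (rule sum_le_suminf) (use exp_sums_real[of t] assms in \<open>auto simp: sums_iff\<close>)
  then show ?thesis using exp_sums_real[of t] by (simp add: sums_iff)
qed

lemma term_le1: assumes "(t::real) \<ge> 0"
  shows "t ^ (2 * k + n) / (fact k * fact (k + n)) \<le> exp t * (t^k / fact k)"
proof -
  have "t ^ (2 * k + n) / (fact k * fact (k + n)) = (t^k / fact k) * (t^(k+n) / fact (k+n))"
    by (simp add: power_add[symmetric] mult_2 add.assoc)
  also have "\<dots> \<le> (t^k / fact k) * exp t"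
    by (rule mult_left_mono[OF pow_fact_le_exp]) (use assms in auto)
  finally show ?thesis by (simp only: mult.commute)
qed

lemma bessel_summable: assumes "(x::real) \<ge> 0"
  shows "summable (\<lambda>k. (x / 2) ^ (2 * k + n) / (fact k * fact (k + n)))"
proof (rule summable_comparison_test[OF _ summable_mult[OF sums_summable[OF exp_sums_real[of "x/2"]], of "exp (x/2)"]])
  show "\<exists>N. \<forall>k\<ge>N. norm ((x / 2) ^ (2 * k + n) / (fact k * fact (k + n))) \<le> exp (x/2) * ((x/2)^k / fact k)"
    using term_le1[of "x/2"] assms by auto
qed

lemma bessel_le_exp: assumes "(x::real) \<ge> 0" shows "besselI n x \<le> exp x"
proof -
  have "besselI n x \<le> (\<Sum>k. exp (x/2) * ((x/2)^k / fact k))"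
    unfolding besselI_def
    by (rule suminf_le) (use term_le1[of "x/2"] assms bessel_summable[OF assms] 
         summable_mult[OF sums_summable[OF exp_sums_real[of "x/2"]], of "exp (x/2)"] in auto)
  also have "\<dots> = exp (x/2) * exp (x/2)"
    using sums_mult[OF exp_sums_real[of "x/2"], of "exp (x/2)"] by (simp add: sums_iff)
  also have "\<dots> = exp x" by (simp add: exp_add[symmetric])
  finally show ?thesis .
qed

lemma fact_add_ge: "fact n * real n ^ k \<le> (fact (k + n) :: real)"
proof (induction k)
  case 0 then show ?case by simp
next
  case (Suc k)
  have "fact n * real n ^ Suc k = (fact n * real n ^ k) * real n" by simp
  also have "\<dots> \<le> fact (k + n) * real (Suc (k + n))"
    by (rule mult_mono[OF Suc]) auto
  also have "\<dots> = fact (Suc k + n)" by simp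
  finally show ?case .
qed

lemma term_le2: assumes "(t::real) \<ge> 0" "n \<ge> 1"
  shows "t ^ (2 * k + n) / (fact k * fact (k + n)) \<le> t^n / fact n * ((t^2 / n)^k / fact k)"
proof -
  have pos: "fact n * real n ^ k > 0" using assms by auto
  have "t ^ (2 * k + n) / (fact k * fact (k + n)) \<le> t ^ (2 * k + n) / (fact k * (fact n * real n ^ k))"
    by (rule divide_left_mono) (use assms fact_add_ge[of n k] pos in \<open>auto intro!: mult_left_mono\<close>)
  also have "\<dots> = t^n / fact n * ((t^2 / n)^k / fact k)"
  proof -
    have "t ^ (2 * k + n) = t^n * (t^2)^k" by (simp add: power_add power_mult)
    then show ?thesis by (simp add: power_divide field_simps)
  qed
  finally show ?thesis .
qed

lemma bessel_le2: assumes "(x::real) \<ge> 0" "n \<ge> 1"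
  shows "besselI n x \<le> (x/2)^n / fact n * exp ((x/2)^2 / n)"
proof -
  have "besselI n x \<le> (\<Sum>k. (x/2)^n / fact n * (((x/2)^2 / n)^k / fact k))"
    unfolding besselI_def
    by (rule suminf_le[OF _ bessel_summable[OF assms(1)] 
         summable_mult[OF sums_summable[OF exp_sums_real[of "(x/2)^2/n"]]]])
      (rule term_le2; use assms in auto)
  also have "\<dots> = (x/2)^n / fact n * exp ((x/2)^2 / n)"
    using sums_mult[OF exp_sums_real[of "(x/2)^2/n"], of "(x/2)^n / fact n"] by (simp add: sums_iff)
  finally show ?thesis .
qed

lemma bessel_ge: assumes "(x::real) \<ge> 0" shows "(x/2)^n / fact n \<le> besselI n x"
proof -
  have "(\<Sum>k\<in>{0}. (x / 2) ^ (2 * k + n) / (fact k * fact (k + n))) \<le> besselI n x"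
    unfolding besselI_def by (rule sum_le_suminf) (use bessel_summable[OF assms] assms in auto)
  then show ?thesis by simp
qed

lemma fpref_eq: assumes "m \<ge> 2" "E > 0"
  shows "fpref m E = exp (-4*E) * fact (m-1) * besselI (m-1) (4*E) * (2*E)^2 / (2*real m*(2*E)^(m-1))"
proof -
  have g: "Gamma (real m) = fact (m-1)"
    using Gamma_fact[of "m-1"] assms by (simp add: of_nat_diff)
  have e: "real m - 3 = real (m-1) - real 2" using assms by (simp add: of_nat_diff)
  have "(2*E) powr (real m - 3) = (2*E) powr (real (m-1)) / (2*E) powr (real 2)"
    unfolding e by (rule powr_diff)
  also have "\<dots> = (2*E)^(m-1) / (2*E)^2"
    using assms by (simp only: powr_realpow)
  finally have p: "(2*E) powr (real m - 3) = (2*E)^(m-1) / (2*E)^2" .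
  show ?thesis unfolding fpref_def g p using assms by (simp add: field_simps)
qed

lemma fpref_U1: assumes "m \<ge> 2" "E > 0"
  shows "fpref m E \<le> (2*E)^2 / (2*real m) * exp (-4*E) * exp (4*E^2 / real (m-1))"
proof -
  have b: "besselI (m-1) (4*E) \<le> (2*E)^(m-1) / fact (m-1) * exp (4*E^2 / real (m-1))"
    using bessel_le2[of "4*E" "m-1"] assms by (simp add: power2_eq_square)
  have "fpref m E \<le> exp (-4*E) * fact (m-1) * ((2*E)^(m-1) / fact (m-1) * exp (4*E^2 / real (m-1))) * (2*E)^2 / (2*real m*(2*E)^(m-1))"
    unfolding fpref_eq[OF assms] using assms b
    by (intro divide_right_mono mult_right_mono mult_left_mono) auto
  also have "\<dots> = (2*E)^2 / (2*real m) * exp (-4*E) * exp (4*E^2 / real (m-1))"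
    using assms by (simp add: field_simps)
  finally show ?thesis .
qed

lemma fpref_U2: assumes "m \<ge> 2" "E > 0"
  shows "fpref m E \<le> fact (m-1) * (2*E)^2 / (2*real m*(2*E)^(m-1))"
proof -
  have "fpref m E \<le> exp (-4*E) * fact (m-1) * exp (4*E) * (2*E)^2 / (2*real m*(2*E)^(m-1))"
    unfolding fpref_eq[OF assms] using assms bessel_le_exp[of "4*E" "m-1"]
    by (intro divide_right_mono mult_right_mono mult_left_mono) auto
  also have "\<dots> = fact (m-1) * (2*E)^2 / (2*real m*(2*E)^(m-1))"
    by (simp add: exp_minus field_simps)
  finally show ?thesis .
qed

lemma fpref_L: assumes "m \<ge> 2" "E > 0"
  shows "exp (-4*E) * (2*E)^2 / (2*real m) \<le> fpref m E"
proof -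
  have "exp (-4*E) * (2*E)^2 / (2*real m) = exp (-4*E) * fact (m-1) * ((2*E)^(m-1) / fact (m-1)) * (2*E)^2 / (2*real m*(2*E)^(m-1))"
    using assms by (simp add: field_simps)
  also have "\<dots> \<le> fpref m E"
    unfolding fpref_eq[OF assms] using assms bessel_ge[of "4*E" "m-1"]
    by (intro divide_right_mono mult_right_mono mult_left_mono) auto
  finally show ?thesis .
qed



lemma part2_aux: assumes a: "a > 0" and r: "r < 1" and b: "0 < b" "b < 1"
  shows "filterlim (\<lambda>m::nat. exp (-4*(a*real m powr r)) * (2*(a*real m powr r))^2 / (2*real m) / b^m) at_top sequentially"
proof -
  define L where "L = (\<lambda>m::nat. ln 2 + 2*ln a + real m * (- ln b - 4*a*real m powr (r-1) + (2*r-1)*ln (real m) / real m))"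
  have eq: "exp (-4*(a*real m powr r)) * (2*(a*real m powr r))^2 / (2*real m) / b^m = exp (L m)" if m: "m \<ge> 1" for m
  proof -
    have mp: "real m > 0" using m by simp
    have pos: "exp (-4*(a*real m powr r)) * (2*(a*real m powr r))^2 / (2*real m) / b^m > 0"
      using mp a b by simp
    have "ln (exp (-4*(a*real m powr r)) * (2*(a*real m powr r))^2 / (2*real m) / b^m)
          = -4*(a*real m powr r) + 2 * (ln 2 + ln a + r * ln (real m)) - (ln 2 + ln (real m)) - real m * ln b"
      using mp a b by (simp add: ln_mult ln_div ln_realpow ln_powr)
    also have "\<dots> = L m"
    proof -
      have "real m powr r = real m * real m powr (r - 1)"
        using powr_mult_base[of "real m" "r-1"] mp by simp
      then show ?thesis unfolding L_def using mp by (simp add: field_simps)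
    qed
    finally show ?thesis using pos by (metis exp_ln)
  qed
  have t1: "((\<lambda>m::nat. real m powr (r-1)) \<longlongrightarrow> 0) sequentially"
    by (rule tendsto_neg_powr) (use r filterlim_real_sequentially in auto)
  have t2: "((\<lambda>m::nat. ln (real m) / real m) \<longlongrightarrow> 0) sequentially" by real_asymp
  have t3: "((\<lambda>m::nat. - ln b - 4*a*real m powr (r-1) + (2*r-1)*ln (real m) / real m) \<longlongrightarrow> - ln b - 4*a*0 + (2*r-1)*0) sequentially"
    by (intro tendsto_intros t1) (use t2 tendsto_mult[OF tendsto_const t2] in auto)
  have lb: "- ln b > 0" using b by simp
  have "filterlim (\<lambda>m::nat. (- ln b - 4*a*real m powr (r-1) + (2*r-1)*ln (real m) / real m) * real m) at_top sequentially"
    by (rule filterlim_tendsto_pos_mult_at_top[OF t3]) (use lb filterlim_real_sequentially in auto)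
  then have "filterlim (\<lambda>m::nat. ln 2 + 2*ln a + (- ln b - 4*a*real m powr (r-1) + (2*r-1)*ln (real m) / real m) * real m) at_top sequentially"
    by (rule filterlim_tendsto_add_at_top[OF tendsto_const])
  then have "filterlim L at_top sequentially" unfolding L_def by (simp add: mult.commute)
  then have "filterlim (\<lambda>m. exp (L m)) at_top sequentially"
    by (rule filterlim_compose[OF exp_at_top])
  then show ?thesis
  proof (rule filterlim_cong[THEN iffD1, rotated 3])
    show "\<forall>\<^sub>F x in sequentially. exp (L x) = exp (-4*(a*real x powr r)) * (2*(a*real x powr r))^2 / (2*real x) / b^x"
      unfolding eventually_sequentially using eq by (metis)
  qed auto
qed


lemma geo: assumes "0 < p" "p < 1"
  shows "\<forall>\<^sub>F n in sequentially. real n^2 * p^n \<le> sqrt p ^ n"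
proof -
  define t where "t = sqrt (sqrt p)"
  have t: "0 < t" "t < 1" using assms by (auto simp: t_def)
  have "(\<lambda>n. real n * t^n) \<longlonglongrightarrow> 0" using powser_times_n_limit_0[of t] t by simp
  then have "\<forall>\<^sub>F n in sequentially. real n * t^n < 1"
    by (rule order_tendstoD) simp
  then show ?thesis
  proof (rule eventually_mono)
    fix n assume h: "real n * t^n < 1"
    have t2: "t^2 = sqrt p" using assms by (simp add: t_def)
    have t4: "(t^2)^2 = t^4" by (simp add: power_mult[symmetric])
    have tp: "sqrt p = t^2" "p = t^4" using t2 t4 assms by auto
    have k: "real n^2 * (t^4)^n = (real n * t^n)^2 * (t^2)^n"
    proof -
      have "(t^4)^n = (t^n)^2 * (t^2)^n"
        by (simp only: power_mult[symmetric] power_add[symmetric]) (simp add: mult.commute)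
      then show ?thesis by (simp add: power_mult_distrib)
    qed
    have "real n^2 * p^n = (real n * t^n)^2 * sqrt p ^ n"
    proof -
      have A: "p^n = (t^4)^n" and B: "sqrt p ^ n = (t^2)^n" using tp by simp_all
      show ?thesis by (simp only: A B k)
    qed
    also have "\<dots> \<le> 1 * sqrt p ^ n"
      by (rule mult_right_mono) (use h t assms in \<open>auto intro!: power_le_one\<close>)
    finally show "real n^2 * p^n \<le> sqrt p ^ n" by simp
  qed
qed

lemma bigo_from: assumes "\<forall>\<^sub>F m in sequentially. 0 \<le> f m \<and> f m \<le> K * (real m^2 * p^m)" "0<p" "p<1"
  shows "f \<in> O(\<lambda>m. sqrt p ^ m)"
proof (rule bigoI[where c="\<bar>K\<bar>"])
  show "\<forall>\<^sub>F x in sequentially. norm (f x) \<le> \<bar>K\<bar> * norm (sqrt p ^ x)"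
    using assms(1) geo[OF assms(2,3)]
  proof eventually_elim
    case (elim m)
    have "norm (f m) = f m" using elim by simp
    also have "\<dots> \<le> \<bar>K\<bar> * (real m^2 * p^m)" using elim(1) assms
      by (smt (verit) mult_nonneg_nonneg zero_le_power zero_le_power2 mult_right_mono abs_ge_self)
    also have "\<dots> \<le> \<bar>K\<bar> * sqrt p ^ m" by (rule mult_left_mono) (use elim in auto)
    finally show ?case using assms by simp
  qed
qed

lemma part1: assumes a: "a > 0"
  shows "\<exists>c::real. 0 < c \<and> c < 1 \<and> (\<lambda>m::nat. fpref m (a * (real m - 1))) \<in> O(\<lambda>m. c ^ m)"
proof -
  obtain K p where p: "0 < p" "p < 1" and ev: "\<forall>\<^sub>F m in sequentially. 0 \<le> fpref m (a * (real m - 1)) \<and> fpref m (a * (real m - 1)) \<le> K * (real m^2 * p^m)"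
  proof (cases "a < 1")
    case True
    define \<rho> where "\<rho> = exp (-4*a*(1-a))"
    have \<rho>: "0 < \<rho>" "\<rho> < 1" using a True by (auto simp: \<rho>_def)
    show ?thesis
    proof (rule that[OF \<rho>, of "4*a^2/\<rho>"])
      show "\<forall>\<^sub>F m in sequentially. 0 \<le> fpref m (a * (real m - 1)) \<and> fpref m (a * (real m - 1)) \<le> 4*a^2/\<rho> * (real m^2 * \<rho>^m)"
        unfolding eventually_sequentially
      proof (intro exI[of _ 2] allI impI)
        fix m :: nat assume m: "2 \<le> m"
        define E where "E = a * (real m - 1)"
        have E: "E > 0" using m a by (simp add: E_def)
        have rm: "real (m-1) = real m - 1" using m by (simp add: of_nat_diff)
        have u0: "fpref m E \<le> (2*E)^2 / (2*real m) * (exp (-4*E) * exp (4*E^2 / real (m-1)))"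
          using fpref_U1[OF m E] by (simp add: mult.assoc)
        have e1: "exp (-4*E) * exp (4*E^2 / real (m-1)) = \<rho> ^ (m-1)"
        proof -
          have "-4*E + 4*E^2 / real (m-1) = real (m-1) * (-4*a*(1-a))"
            using m unfolding E_def rm by (simp add: field_simps power2_eq_square)
          then show ?thesis unfolding \<rho>_def by (simp add: exp_add[symmetric] exp_of_nat_mult[symmetric])
        qed
        have e2: "\<rho> ^ (m-1) = \<rho>^m / \<rho>" using m \<rho> by (simp add: power_diff)
        have u: "fpref m E \<le> (2*E)^2 / (2*real m) * (\<rho>^m / \<rho>)" using u0 e1 e2 by (simp add: ac_simps)
        have q: "(2*E)^2 / (2*real m) \<le> 4*a^2*real m^2"
        proof -
          have "(2*E)^2 / (2*real m) \<le> (2*E)^2 / 1"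
            by (rule divide_left_mono) (use m in auto)
          also have "\<dots> = 4*a^2*(real m - 1)^2" unfolding E_def by (simp add: power_mult_distrib)
          also have "\<dots> \<le> 4*a^2*real m^2" using m by (intro mult_left_mono power_mono) auto
          finally show ?thesis by simp
        qed
        have "fpref m E \<le> 4*a^2*real m^2 * (\<rho>^m / \<rho>)"
          using u mult_right_mono[OF q, of "\<rho>^m / \<rho>"] \<rho> by simp
        moreover have "0 \<le> fpref m E"
        proof -
          have "0 \<le> exp (-4*E) * (2*E)^2 / (2*real m)" by simp
          then show ?thesis using fpref_L[OF m E] by linarith
        qed
        ultimately show "0 \<le> fpref m (a * (real m - 1)) \<and> fpref m (a * (real m - 1)) \<le> 4*a^2/\<rho> * (real m^2 * \<rho>^m)"
          unfolding E_def by (simp add: field_simps)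
      qed
    qed
  next
    case False
    show ?thesis
    proof (rule that[of "1/2" "8*a^2"])
      show "\<forall>\<^sub>F m in sequentially. 0 \<le> fpref m (a * (real m - 1)) \<and> fpref m (a * (real m - 1)) \<le> 8*a^2 * (real m^2 * (1/2)^m)"
        unfolding eventually_sequentially
      proof (intro exI[of _ 2] allI impI)
        fix m :: nat assume m: "2 \<le> m"
        define n where "n = m - 1"
        have n: "n \<ge> 1" "real n = real m - 1" "m = Suc n" using m by (auto simp: n_def of_nat_diff)
        define E where "E = a * (real m - 1)"
        have E: "E > 0" using m a by (simp add: E_def)
        have En: "2*E = 2*a*real n" unfolding E_def n by simp
        have "fpref m E \<le> fact (m-1) * (2*E)^2 / (2*real m*(2*E)^(m-1))"
          by (rule fpref_U2[OF m E])
        also have "\<dots> = fact n * (2*E)^2 / (2*real m*((2*a)^n * real n^n))"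
          unfolding n_def[symmetric] En by (simp add: power_mult_distrib)
        also have "\<dots> \<le> real n^n * (2*E)^2 / (2*real m*((2*a)^n * real n^n))"
        proof -
          have f: "fact n \<le> real n ^ n" using fact_le_power[of n, where 'a=real] by simp
          have d: "0 \<le> 2*real m*((2*a)^n * real n^n)" using a by simp
          show ?thesis by (rule divide_right_mono[OF mult_right_mono[OF f] d]) simp
        qed
        also have "\<dots> = (2*E)^2 / (2*real m*(2*a)^n)"
        proof -
          have nz: "real n ^ n \<noteq> 0" using n by simp
          show ?thesis using nz by (simp add: field_simps)
        qed
        also have "\<dots> \<le> (2*E)^2 / (1 * 2^n)"
        proof (rule divide_left_mono)
          have "(2::real)^n \<le> (2*a)^n" using False by (intro power_mono) auto
          moreover have "1 \<le> 2*real m" using m by simp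
          ultimately show "1 * 2^n \<le> 2*real m*(2*a)^n"
            by (intro mult_mono) auto
        qed (use E m a in auto)
        also have "\<dots> = (2*E)^2 * 2 * (1/2)^m" using n by (simp add: power_divide field_simps)
        also have "\<dots> \<le> 8*a^2 * (real m^2 * (1/2)^m)"
        proof -
          have "(2*E)^2 \<le> 4*a^2*real m^2"
            unfolding E_def using m a by (simp add: power_mult_distrib)
          then show ?thesis by (simp add: field_simps)
        qed
        finally have "fpref m E \<le> 8*a^2 * (real m^2 * (1/2)^m)" .
        moreover have "0 \<le> fpref m E"
        proof -
          have "0 \<le> exp (-4*E) * (2*E)^2 / (2*real m)" by simp
          then show ?thesis using fpref_L[OF m E] by linarith
        qed
        ultimately show "0 \<le> fpref m (a * (real m - 1)) \<and> fpref m (a * (real m - 1)) \<le> 8*a^2 * (real m^2 * (1/2)^m)"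
          unfolding E_def by simp
      qed
    qed auto
  qed
  show ?thesis
    by (rule exI[of _ "sqrt p"]) (use p bigo_from[OF ev p] in auto)
qed


lemma part3: assumes Ep: "\<forall>m. E m > 0" and q: "0 < q" "q < 1" and Eo: "E \<in> O(\<lambda>m. q ^ m)"
  shows "\<exists>c::real. 0 < c \<and> c < 1 \<and> (\<lambda>m. fpref m (E m)) \<in> O(\<lambda>m. c ^ m)"
proof -
  obtain C where C: "C > 0" and ev: "\<forall>\<^sub>F m in sequentially. norm (E m) \<le> C * norm (q ^ m)"
    using Eo by (elim landau_o.bigE)
  have "(\<lambda>m. fpref m (E m)) \<in> O(\<lambda>m. q ^ m)"
  proof (rule bigoI[where c="2*C^2*exp (4*C^2)"])
    show "\<forall>\<^sub>F m in sequentially. norm (fpref m (E m)) \<le> 2*C^2*exp (4*C^2) * norm (q ^ m)"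
      using ev eventually_ge_at_top[of 2]
    proof eventually_elim
      case (elim m)
      have m: "m \<ge> 2" using elim by simp
      have E: "E m > 0" using Ep by simp
      have qm: "q^m \<le> 1" "0 < q^m" using q by (auto intro: power_le_one)
      have EC: "E m \<le> C * q^m" using elim E q by simp
      have E1: "E m \<le> C" using EC qm C by (smt (verit) mult_left_le)
      have E2: "(E m)^2 \<le> C^2 * q^m"
      proof -
        have "(E m)^2 \<le> (C * q^m)^2" using EC E by (intro power_mono) auto
        also have "\<dots> = C^2 * (q^m * q^m)" by (simp add: power2_eq_square)
        also have "\<dots> \<le> C^2 * q^m" using qm by (intro mult_left_mono) (auto simp: mult_le_cancel_right1)
        finally show ?thesis .
      qed
      have nn: "0 \<le> fpref m (E m)"
      proof -
        have "0 \<le> exp (-4*E m) * (2*E m)^2 / (2*real m)" by simp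
        then show ?thesis using fpref_L[OF m E] by linarith
      qed
      have "fpref m (E m) \<le> (2*E m)^2 / (2*real m) * exp (-4*E m) * exp (4*(E m)^2 / real (m-1))"
        by (rule fpref_U1[OF m E])
      also have "\<dots> \<le> (2*(E m)^2) * 1 * exp (4*C^2)"
      proof (intro mult_mono)
        show "(2*E m)^2 / (2*real m) \<le> 2*(E m)^2"
        proof -
          have "(2*E m)^2 / (2*real m) \<le> (2*E m)^2 / 2" by (rule divide_left_mono) (use m in auto)
          then show ?thesis by (simp add: power_mult_distrib)
        qed
        show "exp (-4*E m) \<le> 1" using E by simp
        show "exp (4*(E m)^2 / real (m-1)) \<le> exp (4*C^2)"
        proof -
          have "4*(E m)^2 / real (m-1) \<le> 4*(E m)^2 / 1" by (rule divide_left_mono) (use m in auto)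
          also have "\<dots> \<le> 4*C^2" using E1 E by (simp add: power_mono)
          finally show ?thesis by simp
        qed
      qed auto
      also have "\<dots> \<le> 2*(C^2 * q^m) * exp (4*C^2)" using E2 by simp
      finally show ?case using nn qm by (simp add: ac_simps)
    qed
  qed
  then show ?thesis using q by blast
qed

lemma part2: assumes a: "a > 0" and r: "r < 1" and b: "0 < b" "b < 1"
  shows "filterlim (\<lambda>m::nat. fpref m (a * real m powr r) / b ^ m) at_top sequentially"
proof (rule filterlim_at_top_mono[OF part2_aux[OF a r b]])
  show "\<forall>\<^sub>F m in sequentially. exp (-4*(a*real m powr r)) * (2*(a*real m powr r))^2 / (2*real m) / b^m \<le> fpref m (a * real m powr r) / b ^ m"
    using eventually_ge_at_top[of "2::nat"]
  proof eventually_elim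
    case (elim m)
    have E: "a * real m powr r > 0" using a elim by simp
    show ?case by (rule divide_right_mono[OF fpref_L[OF elim E]]) (use b in simp)
  qed
qed

theorem mainTheorem7:
  shows "(\<forall>a::real. a > 0 \<longrightarrow>
            (\<exists>c::real. 0 < c \<and> c < 1 \<and>
               (\<lambda>m::nat. fpref m (a * (real m - 1))) \<in> O(\<lambda>m. c ^ m)))
       \<and> (\<forall>(a::real) (r::real) (b::real). a > 0 \<longrightarrow> r < 1 \<longrightarrow> 0 < b \<longrightarrow> b < 1 \<longrightarrow>
            filterlim (\<lambda>m::nat. fpref m (a * real m powr r) / b ^ m) at_top sequentially)
       \<and> (\<forall>E::nat \<Rightarrow> real. (\<forall>m. E m > 0) \<longrightarrow>
            (\<exists>q::real. 0 < q \<and> q < 1 \<and> E \<in> O(\<lambda>m. q ^ m)) \<longrightarrow>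
            (\<exists>c::real. 0 < c \<and> c < 1 \<and> (\<lambda>m. fpref m (E m)) \<in> O(\<lambda>m. c ^ m)))"
  using part1 part2 part3 by blast

end
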